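(* Let $n$ and $r$ be sufficiently large integers with $\log\log n\ll r\le 0.01\log^{1/2}n/\log\log n$ (i.e., $r/\log\log n\to\infty$), and let $\mathcal{H}=\mathcal{H}(n,r,r)$. If $T\subseteq V(\mathcal{H})$ satisfies $|T|\ge 0.1\,v(\mathcal{H})=0.1\,n^r$, then $$e(\mathcal{H}[T])\ge \frac{n^{2r}}{10^{r+2}\,2^{3r^2+3r}\,(r+1)!\,\log n}\ge 10^{-r^2}\,e(\mathcal{H}).$$
   Context: Logarithms are to base 2. $\mathcal{H}(n,r,r)$ is the $r$-uniform hypergraph with vertex set $[n]^r$ whose edges are all $r$-element subsets of $[n]^r$ lying on a common line in $\mathbb{R}^r$. $v(\cdot)$ and $e(\cdot)$ denote numbers of vertices and edges, and $\mathcal{H}[T]$ is the subhypergraph induced by $T$ (edges contained in $T$). *)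

theory Defs
  imports Complex_Main
begin

text \<open>Points of [n]^r are represented as functions nat => nat that take values in
  {1..n} on the coordinates 0..r-1 and are 0 elsewhere (extensional encoding).\<close>

definition grid :: "nat \<Rightarrow> nat \<Rightarrow> (nat \<Rightarrow> nat) set" where
  "grid n r = {x. (\<forall>i<r. x i \<in> {1..n}) \<and> (\<forall>i\<ge>r. x i = 0)}"

definition on_common_line :: "nat \<Rightarrow> (nat \<Rightarrow> nat) set \<Rightarrow> bool" where
  "on_common_line r S \<longleftrightarrow>
     (\<exists>a d :: nat \<Rightarrow> real. (\<exists>i<r. d i \<noteq> 0) \<and>
        (\<forall>x\<in>S. \<exists>t::real. \<forall>i<r. real (x i) = a i + t * d i))"

definition Hedges :: "nat \<Rightarrow> nat \<Rightarrow> (nat \<Rightarrow> nat) set set" where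
  "Hedges n r = {S. S \<subseteq> grid n r \<and> card S = r \<and> on_common_line r S}"

definition induced_edges :: "nat \<Rightarrow> nat \<Rightarrow> (nat \<Rightarrow> nat) set \<Rightarrow> nat" where
  "induced_edges n r T = card {S \<in> Hedges n r. S \<subseteq> T}"

end

theory Submission
  imports Defs "HOL-Analysis.Harmonic_Numbers"
begin

definition cube :: "nat \<Rightarrow> 'a::zero set \<Rightarrow> (nat \<Rightarrow> 'a) set" where
  "cube r A = {p. (\<forall>i<r. p i \<in> A) \<and> (\<forall>i\<ge>r. p i = 0)}"

lemma cube_0: "cube 0 A = {\<lambda>_. 0}"
  unfolding cube_def by auto

lemma cube_Suc: "cube (Suc r) A = (\<lambda>(p,a). p(r:=a)) ` (cube r A \<times> A)"
proof (rule set_eqI, rule iffI)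
  fix x assume x: "x \<in> cube (Suc r) A"
  have "x = (\<lambda>(p,a). p(r:=a)) (x(r:=0), x r)" by auto
  moreover have "(x(r:=0), x r) \<in> cube r A \<times> A" using x unfolding cube_def by auto
  ultimately show "x \<in> (\<lambda>(p,a). p(r:=a)) ` (cube r A \<times> A)" by blast
next
  fix x assume "x \<in> (\<lambda>(p,a). p(r:=a)) ` (cube r A \<times> A)"
  then show "x \<in> cube (Suc r) A" unfolding cube_def by (auto simp: less_Suc_eq)
qed

lemma cube_Suc_inj: "inj_on (\<lambda>(p,a). p(r:=a)) (cube r A \<times> A)"
proof (rule inj_onI)
  fix x y assume xx: "x \<in> cube r A \<times> A" and yy: "y \<in> cube r A \<times> A"
    and e0: "(\<lambda>(p,a). p(r:=a)) x = (\<lambda>(p,a). p(r:=a)) y"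
  obtain p a where xd: "x = (p,a)" by (cases x)
  obtain q b where yd: "y = (q,b)" by (cases y)
  have p: "(p,a) \<in> cube r A \<times> A" and q: "(q,b) \<in> cube r A \<times> A" using xx yy xd yd by auto
  have e: "p(r:=a) = q(r:=b)" using e0 xd yd by simp
  have "a = b" using fun_cong[OF e, of r] by simp
  moreover have "p = q"
  proof
    fix i show "p i = q i"
      using fun_cong[OF e, of i] p q unfolding cube_def by (cases "i = r") auto
  qed
  ultimately show "x = y" using xd yd by simp
qed

lemma finite_cube: "finite A \<Longrightarrow> finite (cube r A)"
  by (induction r) (auto simp: cube_0 cube_Suc)

lemma sum_cube_prod:
  fixes f :: "'a::zero \<Rightarrow> 'b::comm_semiring_1"
  assumes "finite A"
  shows "(\<Sum>p\<in>cube r A. \<Prod>i<r. f (p i)) = (\<Sum>a\<in>A. f a) ^ r"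
proof (induction r)
  case 0 then show ?case by (simp add: cube_0)
next
  case (Suc r)
  have "(\<Sum>p\<in>cube (Suc r) A. \<Prod>i<Suc r. f (p i))
      = (\<Sum>x\<in>cube r A \<times> A. (\<lambda>p. \<Prod>i<Suc r. f (p i)) ((\<lambda>(p,a). p(r:=a)) x))"
    unfolding cube_Suc by (rule sum.reindex[OF cube_Suc_inj, unfolded comp_def])
  also have "\<dots> = (\<Sum>x\<in>cube r A \<times> A. (\<Prod>i<r. f (fst x i)) * f (snd x))"
    by (rule sum.cong) (auto simp: prod.lessThan_Suc intro!: prod.cong)
  also have "\<dots> = (\<Sum>p\<in>cube r A. \<Prod>i<r. f (p i)) * (\<Sum>a\<in>A. f a)"
    by (simp add: sum_product sum.cartesian_product split_beta)
  finally show ?case using Suc by (simp add: mult.commute)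
qed

lemma card_cube: "finite A \<Longrightarrow> card (cube r A) = card A ^ r"
  using sum_cube_prod[of A "\<lambda>_. 1::nat" r] by simp

lemma grid_cube: "grid n r = cube r {1..n}"
  unfolding grid_def cube_def by simp

lemma card_grid: "card (grid n r) = n ^ r"
  by (simp add: grid_cube card_cube)


definition pmx :: "nat \<Rightarrow> (nat \<Rightarrow> int) \<Rightarrow> int" where
  "pmx r p = Max ((\<lambda>i. \<bar>p i\<bar>) ` {..<r})"

definition Rset :: "nat \<Rightarrow> nat \<Rightarrow> (nat \<Rightarrow> int) \<Rightarrow> int set" where
  "Rset n r p = {k. k \<noteq> 0 \<and> \<bar>k\<bar> * pmx r p \<le> int n}"

definition lpt :: "(nat \<Rightarrow> nat) \<Rightarrow> (nat \<Rightarrow> int) \<Rightarrow> int \<Rightarrow> (nat \<Rightarrow> nat)" where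
  "lpt u p k = (\<lambda>i. nat (int (u i) + k * p i))"

lemma edge_param:
  assumes S: "S \<in> Hedges n r" and r: "r \<ge> 2"
  shows "\<exists>u p K. u \<in> grid n r \<and> p \<in> cube r {-int n..int n} \<and> (\<exists>i<r. p i \<noteq> 0)
     \<and> K \<subseteq> Rset n r p \<and> card K = r - 1 \<and> S = insert u (lpt u p ` K)"
proof -
  have Sg: "S \<subseteq> grid n r" and cS: "card S = r" and ol: "on_common_line r S"
    using S unfolding Hedges_def by auto
  obtain a d where i0ex: "\<exists>i<r. d i \<noteq> (0::real)"
    and tx: "\<forall>x\<in>S. \<exists>t::real. \<forall>i<r. real (x i) = a i + t * d i"
    using ol unfolding on_common_line_def by blast
  obtain i0 where i0: "i0 < r" "d i0 \<noteq> 0" using i0ex by blast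
  obtain t where t: "\<And>x i. x \<in> S \<Longrightarrow> i < r \<Longrightarrow> real (x i) = a i + t x * d i"
    using tx by metis
  have fS: "finite S" using cS r by (metis card.infinite not_numeral_le_zero)
  have "1 < card S" using cS r by simp
  then obtain u v where uS: "u \<in> S" and vS: "v \<in> S" and uv: "u \<noteq> v"
  proof -
    have "\<not> (\<forall>x\<in>S. \<forall>y\<in>S. x = y)" using \<open>1 < card S\<close> card_le_Suc0_iff_eq[OF fS] by auto
    thus ?thesis using that by blast
  qed
  have gridD: "\<And>x i. x \<in> S \<Longrightarrow> i < r \<Longrightarrow> 1 \<le> x i \<and> x i \<le> n"
    using Sg unfolding grid_def by auto
  have gridZ: "\<And>x i. x \<in> S \<Longrightarrow> r \<le> i \<Longrightarrow> x i = 0"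
    using Sg unfolding grid_def by auto
  define \<delta> where "\<delta> x = int (x i0) - int (u i0)" for x :: "nat \<Rightarrow> nat"
  define \<rho> where "\<rho> j = d j / d i0" for j
  have F1: "real (x j) - real (u j) = real_of_int (\<delta> x) * \<rho> j" if "x \<in> S" "j < r" for x j
  proof -
    have "real (x j) - real (u j) = (t x - t u) * d j" using t[OF that] t[OF uS that(2)]
      by (simp add: algebra_simps)
    moreover have "real_of_int (\<delta> x) = (t x - t u) * d i0"
      using t[OF that(1) i0(1)] t[OF uS i0(1)] unfolding \<delta>_def by (simp add: algebra_simps)
    moreover have "(t x - t u) * d j = (t x - t u) * d i0 * (d j / d i0)" using i0(2) by simp
    ultimately show ?thesis unfolding \<rho>_def by simp
  qed
  have eqI: "x = y" if "x \<in> S" "y \<in> S" "\<And>j. j < r \<Longrightarrow> x j = y j" for x y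
  proof
    fix j show "x j = y j" using that gridZ[of x j] gridZ[of y j] by (cases "j < r") auto
  qed
  define G where "G = {k::int. \<forall>j<r. real_of_int k * \<rho> j \<in> \<int>}"
  have dG: "\<delta> x \<in> G" if "x \<in> S" for x
  proof -
    have "real_of_int (\<delta> x) * \<rho> j \<in> \<int>" if "j < r" for j
    proof -
      have "real_of_int (\<delta> x) * \<rho> j = real (x j) - real (u j)" using F1[OF \<open>x \<in> S\<close> that] by simp
      also have "\<dots> \<in> \<int>" by (intro Ints_diff Ints_of_nat)
      finally show ?thesis .
    qed
    thus ?thesis unfolding G_def by blast
  qed
  have Gdiff: "k - q * l \<in> G" if "k \<in> G" "l \<in> G" for k l q
  proof -
    have "real_of_int (k - q * l) * \<rho> j \<in> \<int>" if "j < r" for j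
    proof -
      have "real_of_int (k - q * l) * \<rho> j = real_of_int k * \<rho> j - real_of_int q * (real_of_int l * \<rho> j)"
        by (simp add: algebra_simps)
      moreover have "real_of_int k * \<rho> j \<in> \<int>" "real_of_int l * \<rho> j \<in> \<int>"
        using \<open>k \<in> G\<close> \<open>l \<in> G\<close> that unfolding G_def by auto
      ultimately show ?thesis by (simp add: Ints_diff Ints_mult)
    qed
    thus ?thesis unfolding G_def by blast
  qed
  have dv0: "\<delta> v \<noteq> 0"
  proof
    assume "\<delta> v = 0"
    then have "v = u" using eqI[OF vS uS] F1[OF vS] by simp
    thus False using uv by simp
  qed
  have absG: "\<bar>\<delta> v\<bar> \<in> G" using Gdiff[OF dG[OF uS] dG[OF vS], of "- sgn (\<delta> v)"]
    unfolding \<delta>_def by (simp add: abs_sgn mult.commute)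
  define P where "P m = (0 < m \<and> int m \<in> G)" for m :: nat
  have Pex: "P (nat \<bar>\<delta> v\<bar>)" unfolding P_def using absG dv0 by simp
  define gn where "gn = (LEAST m. P m)"
  have Pg: "P gn" unfolding gn_def by (rule LeastI[of P, OF Pex])
  define g where "g = int gn"
  have gpos: "g > 0" and gG: "g \<in> G" using Pg unfolding P_def g_def by auto
  have gdvd: "g dvd k" if "k \<in> G" for k
  proof (rule ccontr)
    assume nd: "\<not> g dvd k"
    have "k mod g = k - (k div g) * g" by (simp add: minus_div_mult_eq_mod)
    hence mG: "k mod g \<in> G" using Gdiff[OF that gG] by simp
    have m0: "k mod g > 0" using nd gpos
      by (metis dvd_eq_mod_eq_0 order_less_le pos_mod_sign)
    have "P (nat (k mod g))" unfolding P_def using mG m0 by simp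
    hence "gn \<le> nat (k mod g)" unfolding gn_def by (rule Least_le)
    moreover have "k mod g < g" using gpos by simp
    ultimately show False using m0 unfolding g_def by linarith
  qed
  define p where "p j = (if j < r then \<lfloor>real_of_int g * \<rho> j\<rfloor> else 0)" for j
  have pr: "real_of_int (p j) = real_of_int g * \<rho> j" if "j < r" for j
  proof -
    have "real_of_int g * \<rho> j \<in> \<int>" using gG that unfolding G_def by auto
    then obtain z where "real_of_int g * \<rho> j = real_of_int z" by (auto elim: Ints_cases)
    thus ?thesis unfolding p_def using that by simp
  qed
  define kk where "kk x = \<delta> x div g" for x
  have dk: "\<delta> x = kk x * g" if "x \<in> S" for x
    using gdvd[OF dG[OF that]] unfolding kk_def by simp
  have coord: "int (x j) = int (u j) + kk x * p j" if "x \<in> S" "j < r" for x j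
  proof -
    have "real (x j) - real (u j) = real_of_int (kk x) * real_of_int (p j)"
      using F1[OF that] dk[OF that(1)] pr[OF that(2)] by (simp add: algebra_simps)
    hence "real_of_int (int (x j)) = real_of_int (int (u j) + kk x * p j)" by simp
    thus ?thesis by (metis of_int_eq_iff)
  qed
  have lptx: "lpt u p (kk x) = x" if "x \<in> S" for x
  proof
    fix j show "lpt u p (kk x) j = x j"
    proof (cases "j < r")
      case True thus ?thesis unfolding lpt_def using coord[OF that True] by simp
    next
      case False thus ?thesis unfolding lpt_def p_def using gridZ[OF that] gridZ[OF uS] by simp
    qed
  qed
  have kbound: "\<bar>kk x * p j\<bar> \<le> int n" if "x \<in> S" "j < r" for x j
    using coord[OF that] gridD[OF that] gridD[OF uS that(2)] by linarith
  have kv0: "kk v \<noteq> 0" using dk[OF vS] dv0 by auto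
  have pb: "\<bar>p j\<bar> \<le> int n" if "j < r" for j
  proof -
    have k1: "1 \<le> \<bar>kk v\<bar>" using kv0 by arith
    have "\<bar>p j\<bar> \<le> \<bar>kk v\<bar> * \<bar>p j\<bar>" using mult_right_mono[OF k1, of "\<bar>p j\<bar>"] by simp
    thus ?thesis using kbound[OF vS that] by (simp add: abs_mult)
  qed
  have pi0: "p i0 = g"
    using pr[OF i0(1)] i0(2) unfolding \<rho>_def by simp
  define K where "K = kk ` (S - {u})"
  have inj: "inj_on kk (S - {u})"
  proof (rule inj_onI)
    fix x y assume "x \<in> S - {u}" "y \<in> S - {u}" "kk x = kk y"
    thus "x = y" using lptx[of x] lptx[of y] by force
  qed
  have cK: "card K = r - 1" unfolding K_def using card_image[OF inj] cS fS uS by simp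
  have K0: "0 \<notin> K"
  proof
    assume "0 \<in> K"
    then obtain x where xx0: "x \<in> S - {u}" "0 = kk x" unfolding K_def by (rule imageE)
    hence xx: "x \<in> S" "x \<noteq> u" "kk x = 0" by auto
    have ku: "kk u = 0" by (simp add: kk_def \<delta>_def)
    have "x = lpt u p (kk x)" using lptx[OF xx(1)] by (rule sym)
    also have "\<dots> = lpt u p (kk u)" using xx(3) ku by (simp only:)
    also have "\<dots> = u" using lptx[OF uS] .
    finally show False using xx(2) by simp
  qed
  have nen: "(\<lambda>i. \<bar>p i\<bar>) ` {..<r} \<noteq> {}" using i0 by auto
  have KR: "K \<subseteq> Rset n r p"
  proof
    fix k assume kK: "k \<in> K"
    then obtain x where xS0: "x \<in> S - {u}" and kx: "k = kk x" unfolding K_def by (rule imageE)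
    hence xS: "x \<in> S" by simp
    have "pmx r p \<in> (\<lambda>i. \<bar>p i\<bar>) ` {..<r}" unfolding pmx_def by (rule Max_in) (use nen in auto)
    then obtain j where "j < r" "pmx r p = \<bar>p j\<bar>" by auto
    hence "\<bar>k\<bar> * pmx r p \<le> int n" using kbound[OF xS] kx by (simp add: abs_mult)
    thus "k \<in> Rset n r p" unfolding Rset_def using K0 kK by auto
  qed
  have SK: "S = insert u (lpt u p ` K)"
  proof -
    have "lpt u p ` K = (\<lambda>x. lpt u p (kk x)) ` (S - {u})" unfolding K_def image_image ..
    also have "\<dots> = (\<lambda>x. x) ` (S - {u})" by (rule image_cong) (auto simp: lptx)
    finally have "lpt u p ` K = S - {u}" by simp
    thus ?thesis using uS by auto
  qed
  have ug: "u \<in> grid n r" using Sg uS by auto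
  have pbox: "p \<in> cube r {-int n..int n}" unfolding cube_def
  proof (intro CollectI conjI allI impI)
    fix i assume "i < r" thus "p i \<in> {-int n..int n}" using pb[of i] by (simp add: abs_le_iff)
  next
    fix i assume "r \<le> i" thus "p i = 0" by (simp add: p_def)
  qed
  have pnz: "\<exists>i<r. p i \<noteq> 0" using i0 pi0 gpos by auto
  show ?thesis using ug pbox pnz KR cK SK by blast
qed


definition Pset :: "nat \<Rightarrow> nat \<Rightarrow> (nat \<Rightarrow> int) set" where
  "Pset n r = {p \<in> cube r {-int n..int n}. \<exists>i<r. p i \<noteq> 0}"

lemma pmx_props:
  assumes "p \<in> Pset n r"
  shows "1 \<le> pmx r p" "pmx r p \<le> int n" "\<And>i. i < r \<Longrightarrow> \<bar>p i\<bar> \<le> pmx r p"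
proof -
  obtain i0 where i0: "i0 < r" "p i0 \<noteq> 0" using assms unfolding Pset_def by auto
  have ne: "(\<lambda>i. \<bar>p i\<bar>) ` {..<r} \<noteq> {}" using i0 by auto
  show le: "\<And>i. i < r \<Longrightarrow> \<bar>p i\<bar> \<le> pmx r p" unfolding pmx_def by (rule Max_ge) auto
  show "1 \<le> pmx r p" using le[OF i0(1)] i0(2) by linarith
  have "pmx r p \<in> (\<lambda>i. \<bar>p i\<bar>) ` {..<r}" unfolding pmx_def by (rule Max_in) (use ne in auto)
  then obtain j where "j < r" "pmx r p = \<bar>p j\<bar>" by auto
  moreover have "p j \<in> {-int n..int n}" using assms \<open>j < r\<close> unfolding Pset_def cube_def by auto
  ultimately show "pmx r p \<le> int n" by auto
qed

lemma Rset_props: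
  assumes "p \<in> Pset n r"
  shows "finite (Rset n r p)" "real (card (Rset n r p)) \<le> 2 * real n / real_of_int (pmx r p)"
proof -
  define m where "m = pmx r p"
  have m1: "1 \<le> m" using pmx_props[OF assms] m_def by simp
  define q where "q = int n div m"
  have sub: "Rset n r p \<subseteq> {-q..-1} \<union> {1..q}"
  proof
    fix k assume "k \<in> Rset n r p"
    hence k0: "k \<noteq> 0" and km: "\<bar>k\<bar> * m \<le> int n" unfolding Rset_def m_def by auto
    have "\<bar>k\<bar> * m div m \<le> int n div m" using zdiv_mono1[OF km, of m] m1 by simp
    moreover have "\<bar>k\<bar> * m div m = \<bar>k\<bar>" using m1 by simp
    ultimately have "\<bar>k\<bar> \<le> q" unfolding q_def by simp
    thus "k \<in> {-q..-1} \<union> {1..q}" using k0 by auto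
  qed
  show fin: "finite (Rset n r p)" by (rule finite_subset[OF sub]) auto
  have "card (Rset n r p) \<le> card ({-q..-1} \<union> {1..q})" by (rule card_mono[OF _ sub]) auto
  also have "\<dots> \<le> card {-q..-1} + card {1..q}" by (rule card_Un_le)
  also have "\<dots> = 2 * nat q" by simp
  finally have c0: "card (Rset n r p) \<le> 2 * nat q" .
  have q0: "0 \<le> q" unfolding q_def using m1 by (simp add: pos_imp_zdiv_nonneg_iff)
  have "real (card (Rset n r p)) \<le> real (2 * nat q)" using c0 by linarith
  hence c: "real (card (Rset n r p)) \<le> 2 * real_of_int q" using q0 by simp
  have "q * m \<le> int n" unfolding q_def using m1
    by (metis div_mult_mod_eq le_add_same_cancel1 mult.commute pos_mod_sign zero_less_one order_less_le_trans)
  hence "real_of_int q * real_of_int m \<le> real n" by (metis of_int_le_iff of_int_mult of_int_of_nat_eq)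
  hence "real_of_int q \<le> real n / real_of_int m" using m1 by (simp add: field_simps)
  thus "real (card (Rset n r p)) \<le> 2 * real n / real_of_int (pmx r p)" using c unfolding m_def by simp
qed


lemma term_bound:
  assumes p: "p \<in> Pset n r" and r: "r \<ge> 1"
  shows "real n ^ r * real (card (Rset n r p) choose (r-1))
     \<le> 2^(r-1) * real n ^ (2*r) * (\<Prod>i<r. 1 / real_of_int (max \<bar>p i\<bar> 1))"
proof -
  define c where "c = card (Rset n r p)"
  define m where "m = real_of_int (pmx r p)"
  have m1: "1 \<le> m" and mn: "m \<le> real n" using pmx_props[OF p] unfolding m_def by simp_all
  have cb: "real c \<le> 2 * real n / m" using Rset_props[OF p] unfolding c_def m_def by simp
  have C1: "real (c choose (r-1)) \<le> real c ^ (r-1)"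
  proof (cases "r - 1 \<le> c")
    case True
    have "c choose (r-1) \<le> c ^ (r-1)" by (rule binomial_le_pow[OF True])
    thus ?thesis by (metis of_nat_le_iff of_nat_power)
  next
    case False hence z: "c choose (r-1) = 0" by (intro binomial_eq_0) simp
    have "real c ^ (r-1) \<ge> 0" by simp
    thus ?thesis unfolding z by simp
  qed
  also have "\<dots> \<le> (2 * real n / m) ^ (r-1)" by (rule power_mono[OF cb]) simp
  also have "\<dots> = 2^(r-1) * real n ^ (r-1) / m ^ (r-1)" by (simp add: power_divide power_mult_distrib)
  finally have C2: "real (c choose (r-1)) \<le> 2^(r-1) * real n ^ (r-1) / m ^ (r-1)" .
  define Q where "Q = (\<Prod>i<r. real_of_int (max \<bar>p i\<bar> 1))"
  have Q1: "Q \<ge> 1" unfolding Q_def by (rule prod_ge_1) auto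
  have "Q \<le> (\<Prod>i<r. m)" unfolding Q_def
  proof (rule prod_mono)
    fix i assume "i \<in> {..<r}"
    hence "\<bar>p i\<bar> \<le> pmx r p" using pmx_props(3)[OF p] by simp
    thus "0 \<le> real_of_int (max \<bar>p i\<bar> 1) \<and> real_of_int (max \<bar>p i\<bar> 1) \<le> m"
      using pmx_props(1)[OF p] unfolding m_def by simp
  qed
  also have "\<dots> = m ^ r" by simp
  also have "\<dots> = m * m ^ (r-1)" using r by (cases r) simp_all
  also have "\<dots> \<le> real n * m ^ (r-1)" by (rule mult_right_mono[OF mn]) (use m1 in simp)
  finally have QB: "Q \<le> real n * m ^ (r-1)" .
  have mp: "m ^ (r-1) > 0" using m1 by simp
  have inv: "1 / m ^ (r-1) \<le> real n / Q"
    using QB Q1 mp by (simp add: field_simps)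
  have P1: "(\<Prod>i<r. 1 / real_of_int (max \<bar>p i\<bar> 1)) = 1 / Q"
    unfolding Q_def by (simp add: prod_dividef)
  have "real n ^ r * real (c choose (r-1)) \<le> real n ^ r * (2^(r-1) * real n ^ (r-1) / m ^ (r-1))"
    by (rule mult_left_mono[OF C2]) simp
  also have "\<dots> = 2^(r-1) * real n ^ r * real n ^ (r-1) * (1 / m ^ (r-1))" by simp
  also have "\<dots> \<le> 2^(r-1) * real n ^ r * real n ^ (r-1) * (real n / Q)"
    by (rule mult_left_mono[OF inv]) simp
  also have "\<dots> = 2^(r-1) * (real n ^ r * real n ^ (r-1) * real n) * (1 / Q)" by simp
  also have "real n ^ r * real n ^ (r-1) * real n = real n ^ (2*r)"
  proof -
    have a: "real n ^ (r-1) * real n = real n ^ r" using r by (cases r) (simp_all add: mult.commute)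
    have b: "real n ^ (2*r) = real n ^ r * real n ^ r" by (simp add: mult_2 power_add)
    show ?thesis using a b by (simp add: mult.assoc)
  qed
  finally show ?thesis unfolding c_def P1 .
qed


definition Hs :: "nat \<Rightarrow> real" where
  "Hs n = (\<Sum>a\<in>{-int n..int n}. 1 / real_of_int (max \<bar>a\<bar> 1))"

lemma card_Hedges_bound:
  assumes r: "r \<ge> 2"
  shows "real (card (Hedges n r)) \<le> 2^(r-1) * real n ^ (2*r) * Hs n ^ r"
proof -
  define Par where "Par = (SIGMA p:Pset n r. grid n r \<times> {K. K \<subseteq> Rset n r p \<and> card K = r - 1})"
  define F where "F = (\<lambda>(p::nat\<Rightarrow>int, (u::nat\<Rightarrow>nat, K::int set)). insert u (lpt u p ` K))"
  have sub: "Hedges n r \<subseteq> F ` Par"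
  proof
    fix S assume "S \<in> Hedges n r"
    then obtain u p K where "u \<in> grid n r" "p \<in> cube r {-int n..int n}" "\<exists>i<r. p i \<noteq> 0"
      "K \<subseteq> Rset n r p" "card K = r - 1" "S = insert u (lpt u p ` K)"
      using edge_param[OF _ r] by metis
    hence "(p, u, K) \<in> Par" "S = F (p, u, K)" unfolding Par_def Pset_def F_def by auto
    thus "S \<in> F ` Par" by blast
  qed
  have finP: "finite (Pset n r)" unfolding Pset_def by (rule finite_subset[OF _ finite_cube[of "{-int n..int n}" r]]) auto
  have finG: "finite (grid n r)" by (simp add: grid_cube finite_cube)
  have finK: "finite {K. K \<subseteq> Rset n r p \<and> card K = r - 1}" if "p \<in> Pset n r" for p
    using Rset_props(1)[OF that] by simp
  have finPar: "finite Par" unfolding Par_def using finP finG finK by (intro finite_SigmaI) auto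
  have "card (Hedges n r) \<le> card (F ` Par)" by (rule card_mono[OF finite_imageI[OF finPar] sub])
  also have "\<dots> \<le> card Par" by (rule card_image_le[OF finPar])
  also have "card Par = (\<Sum>p\<in>Pset n r. n ^ r * (card (Rset n r p) choose (r - 1)))"
  proof -
    have "card Par = (\<Sum>p\<in>Pset n r. card (grid n r \<times> {K. K \<subseteq> Rset n r p \<and> card K = r - 1}))"
      unfolding Par_def by (rule card_SigmaI[OF finP]) (use finG finK in blast)
    also have "\<dots> = (\<Sum>p\<in>Pset n r. n ^ r * (card (Rset n r p) choose (r - 1)))"
    proof (rule sum.cong[OF refl])
      fix p assume "p \<in> Pset n r"
      thus "card (grid n r \<times> {K. K \<subseteq> Rset n r p \<and> card K = r - 1}) = n ^ r * (card (Rset n r p) choose (r - 1))"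
        by (simp only: card_cartesian_product card_grid n_subsets[OF Rset_props(1)])
    qed
    finally show ?thesis .
  qed
  finally have c0: "card (Hedges n r) \<le> (\<Sum>p\<in>Pset n r. n ^ r * (card (Rset n r p) choose (r - 1)))" .
  hence "real (card (Hedges n r)) \<le> real (\<Sum>p\<in>Pset n r. n ^ r * (card (Rset n r p) choose (r - 1)))"
    by (simp only: of_nat_le_iff)
  also have "\<dots> = (\<Sum>p\<in>Pset n r. real n ^ r * real (card (Rset n r p) choose (r - 1)))"
    by (simp only: of_nat_sum of_nat_mult of_nat_power)
  also have "\<dots> \<le> (\<Sum>p\<in>Pset n r. 2^(r-1) * real n ^ (2*r) * (\<Prod>i<r. 1 / real_of_int (max \<bar>p i\<bar> 1)))"
    by (rule sum_mono) (rule term_bound, use r in auto)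
  also have "\<dots> \<le> (\<Sum>p\<in>cube r {-int n..int n}. 2^(r-1) * real n ^ (2*r) * (\<Prod>i<r. 1 / real_of_int (max \<bar>p i\<bar> 1)))"
    by (rule sum_mono2[OF finite_cube]) (auto simp: Pset_def intro!: prod_nonneg)
  also have "\<dots> = 2^(r-1) * real n ^ (2*r) * (\<Sum>p\<in>cube r {-int n..int n}. (\<Prod>i<r. 1 / real_of_int (max \<bar>p i\<bar> 1)))"
    by (simp add: sum_distrib_left)
  also have "\<dots> = 2^(r-1) * real n ^ (2*r) * Hs n ^ r"
    unfolding Hs_def by (subst sum_cube_prod[of _ "\<lambda>a. 1 / real_of_int (max \<bar>a\<bar> 1)"]) auto
  finally show ?thesis .
qed


lemma Hs_harm: "Hs n = 1 + 2 * harm n"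
proof (induction n)
  case 0 show ?case by (simp add: Hs_def harm_def)
next
  case (Suc n)
  have e: "{-int (Suc n)..int (Suc n)} = insert (-int (Suc n)) (insert (int (Suc n)) {-int n..int n})" by auto
  have "Hs (Suc n) = 1 / real_of_int (max \<bar>-int (Suc n)\<bar> 1) + (1 / real_of_int (max \<bar>int (Suc n)\<bar> 1) + Hs n)"
    unfolding Hs_def e by (subst sum.insert; simp)+
  also have "\<dots> = Hs n + 2 / (real n + 1)" by (simp add: field_simps)
  finally show ?case using Suc by (simp add: harm_Suc field_simps)
qed

lemma harm_upper: "n \<ge> 1 \<Longrightarrow> harm n \<le> 1 + ln (real n + 1)"
proof -
  assume "n \<ge> 1"
  then obtain m where m: "n = Suc m" by (cases n) auto
  have "(euler_mascheroni::real) \<ge> harm (Suc m) - ln (real_of_nat (m + 2)) + 1/real_of_nat (2 * (m + 2))"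
    by (rule euler_mascheroni_lower)
  moreover have "(euler_mascheroni::real) < 13/22" by (rule euler_mascheroni_less_13_over_22)
  moreover have "1/real_of_nat (2 * (m + 2)) \<ge> 0" by simp
  moreover have "ln (real_of_nat (m + 2)) = ln (real n + 1)" using m by simp
  moreover have "(harm n::real) = harm (Suc m)" using m by simp
  ultimately show ?thesis by linarith
qed

lemma Hs_bound: assumes "n \<ge> 8" shows "Hs n \<le> 4 * log 2 (real n)"
proof -
  have L3: "log 2 (real n) \<ge> 3"
  proof -
    have "log 2 (real n) \<ge> log 2 8" using assms by (subst log_le_cancel_iff) auto
    moreover have "log 2 (8::real) = 3"
    proof -
      have "log 2 (8::real) = log 2 (2^3)" by simp
      also have "\<dots> = 3" using log_pow_cancel[of "2::real" 3] by simp
      finally show ?thesis .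
    qed
    ultimately show ?thesis by simp
  qed
  have "ln (real n + 1) \<le> ln (2 * real n)" using assms by (subst ln_le_cancel_iff) auto
  also have "\<dots> = ln 2 + ln (real n)" using assms by (simp add: ln_mult)
  also have "ln (real n) = ln 2 * log 2 (real n)" by (simp add: log_def)
  finally have l: "ln (real n + 1) \<le> ln 2 + ln 2 * log 2 (real n)" .
  have l2: "ln (2::real) < 1" by (rule ln_2_less_1)
  have l20: "ln (2::real) > 0" by simp
  have "ln 2 * log 2 (real n) \<le> 1 * log 2 (real n)" using l2 L3 by (intro mult_right_mono) auto
  hence "ln (real n + 1) \<le> 1 + log 2 (real n)" using l l2 by linarith
  hence "Hs n \<le> 1 + 2 * (1 + (1 + log 2 (real n)))" unfolding Hs_harm using harm_upper[of n] assms by simp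
  hence "Hs n \<le> 5 + 2 * log 2 (real n)" by simp
  thus ?thesis using L3 by linarith
qed


definition pt :: "(nat \<Rightarrow> nat) \<Rightarrow> (nat \<Rightarrow> nat) \<Rightarrow> nat \<Rightarrow> (nat \<Rightarrow> nat)" where
  "pt x d j = (\<lambda>i. x i + j * d i)"

definition Vs :: "nat \<Rightarrow> nat \<Rightarrow> nat \<Rightarrow> (nat \<Rightarrow> nat) \<Rightarrow> (nat \<Rightarrow> nat) set" where
  "Vs n r L d = {x \<in> grid n r. \<forall>i<r. x i + (L - 1) * d i \<le> n}"

definition Dset :: "nat \<Rightarrow> nat \<Rightarrow> (nat \<Rightarrow> nat) set" where
  "Dset N r = {d \<in> cube r {1..N}. coprime (d 0) (d 1)}"

lemma pt_grid:
  assumes x: "x \<in> Vs n r L d" and d: "d \<in> cube r {1..N}" and j: "j < L"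
  shows "pt x d j \<in> grid n r"
proof -
  have m: "j * d i \<le> (L - 1) * d i" for i using j by (intro mult_right_mono) auto
  have xg: "x \<in> grid n r" and xb: "\<And>i. i < r \<Longrightarrow> x i + (L - 1) * d i \<le> n" using x unfolding Vs_def by auto
  show ?thesis unfolding grid_def pt_def
  proof (intro CollectI conjI allI impI)
    fix i assume i: "i < r"
    have "1 \<le> x i" using xg i unfolding grid_def by auto
    moreover have "x i + j * d i \<le> n" using xb[OF i] m[of i] by linarith
    ultimately show "x i + j * d i \<in> {1..n}" by simp
  next
    fix i assume i: "r \<le> i"
    thus "x i + j * d i = 0" using xg d unfolding grid_def cube_def by auto
  qed
qed

lemma pt_inj:
  assumes d: "d \<in> cube r {1..N}" and r: "r \<ge> 1"
  shows "inj (pt x d)"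
proof (rule injI)
  fix j j' assume "pt x d j = pt x d j'"
  hence "x 0 + j * d 0 = x 0 + j' * d 0" unfolding pt_def by meson
  moreover have "d 0 \<ge> 1" using d r unfolding cube_def by auto
  ultimately show "j = j'" by (metis add_left_cancel mult_cancel_right not_one_le_zero)
qed

lemma window_edge:
  assumes x: "x \<in> Vs n r L d" and d: "d \<in> cube r {1..N}" and r: "r \<ge> 1"
    and J: "J \<subseteq> {..<L}" "card J = r"
  shows "pt x d ` J \<in> Hedges n r"
proof -
  have sub: "pt x d ` J \<subseteq> grid n r" using pt_grid[OF x d] J by auto
  have c: "card (pt x d ` J) = r" using card_image[OF inj_on_subset[OF pt_inj[OF d r] subset_UNIV]] J by simp
  have d0: "real (d 0) \<noteq> 0" using d r unfolding cube_def by auto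
  have "on_common_line r (pt x d ` J)"
    unfolding on_common_line_def
  proof (rule exI[of _ "\<lambda>i. real (x i)"], rule exI[of _ "\<lambda>i. real (d i)"], intro conjI)
    show "\<exists>i<r. real (d i) \<noteq> 0" by (rule exI[of _ 0]) (use d0 r in auto)
    show "\<forall>y\<in>pt x d ` J. \<exists>t. \<forall>i<r. real (y i) = real (x i) + t * real (d i)"
      unfolding pt_def by auto
  qed
  thus ?thesis unfolding Hedges_def using sub c by auto
qed

lemma dir_unique:
  assumes d: "d \<in> Dset N r" and d': "d' \<in> Dset N r" and r: "r \<ge> 2"
    and s: "s = pt x d j" "s = pt x' d' i" and s': "s' = pt x d j'" "s' = pt x' d' i'" and ne: "s \<noteq> s'"
  shows "d = d'"
proof -
  have dc: "d \<in> cube r {1..N}" "coprime (d 0) (d 1)" using d unfolding Dset_def by auto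
  have dc': "d' \<in> cube r {1..N}" "coprime (d' 0) (d' 1)" using d' unfolding Dset_def by auto
  have pos: "d 0 \<ge> 1" "d 1 \<ge> 1" "d' 0 \<ge> 1" "d' 1 \<ge> 1" using dc(1) dc'(1) r unfolding cube_def by auto
  define a where "a = int j' - int j"
  define b where "b = int i' - int i"
  have co: "a * int (d k) = b * int (d' k)" for k
  proof -
    have e1: "int (s k) = int (x k) + int j * int (d k)" using s(1) unfolding pt_def by simp
    have e2: "int (s k) = int (x' k) + int i * int (d' k)" using s(2) unfolding pt_def by simp
    have e3: "int (s' k) = int (x k) + int j' * int (d k)" using s'(1) unfolding pt_def by simp
    have e4: "int (s' k) = int (x' k) + int i' * int (d' k)" using s'(2) unfolding pt_def by simp
    have "int (s' k) - int (s k) = a * int (d k)" unfolding a_def e1 e3 by (simp add: algebra_simps)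
    moreover have "int (s' k) - int (s k) = b * int (d' k)" unfolding b_def e2 e4 by (simp add: algebra_simps)
    ultimately show ?thesis by simp
  qed
  have a0: "a \<noteq> 0"
  proof
    assume "a = 0" hence "j = j'" unfolding a_def by simp
    thus False using s s' ne by simp
  qed
  have b0: "b \<noteq> 0" using co[of 0] a0 pos by auto
  have "(a * int (d 0)) * (b * int (d' 1)) = (b * int (d' 0)) * (a * int (d 1))"
    by (simp only: co[of 0] co[of 1])
  hence "(a * b) * (int (d 0) * int (d' 1)) = (a * b) * (int (d' 0) * int (d 1))"
    by (simp only: ac_simps)
  hence "int (d 0) * int (d' 1) = int (d' 0) * int (d 1)" using a0 b0 by simp
  hence cross: "d 0 * d' 1 = d' 0 * d 1" by (metis of_nat_eq_iff of_nat_mult)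
  have "d 0 dvd d' 0 * d 1" using cross by (metis dvd_triv_left)
  hence "d 0 dvd d' 0" using dc(2) by (simp add: coprime_dvd_mult_left_iff)
  moreover have "d' 0 dvd d 0 * d' 1" using cross by (metis dvd_triv_left)
  hence "d' 0 dvd d 0" using dc'(2) by (simp add: coprime_dvd_mult_left_iff)
  ultimately have e0: "d 0 = d' 0" by (rule dvd_antisym)
  hence "a = b" using co[of 0] pos by simp
  show "d = d'"
  proof
    fix k
    have "a * int (d k) = a * int (d' k)" using co[of k] \<open>a = b\<close> by simp
    hence "int (d k) = int (d' k)" using a0 by (simp only: mult_cancel_left) simp
    thus "d k = d' k" by simp
  qed
qed


lemma card_filter_sum: "finite A \<Longrightarrow> card {j \<in> A. P j} = (\<Sum>j\<in>A. if P j then 1 else 0 :: nat)"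
  unfolding card_eq_sum by (rule sum.inter_filter)

lemma inner_big:
  assumes n: "n > 0" and M: "40 * r * M \<le> n" and r: "r \<ge> 1"
  shows "real ((n - 2*M) ^ r) \<ge> 19/20 * real n ^ r"
proof -
  have "40 * 1 * M \<le> 40 * r * M" using r by (intro mult_right_mono) auto
  hence M2: "2 * M \<le> n" using M by linarith
  define x where "x = - (2 * real M / real n)"
  have "2 * real M / real n \<le> 1" using M2 n by (simp add: divide_le_eq_1)
  hence x1: "-1 \<le> x" unfolding x_def by linarith
  have B: "1 + real r * x \<le> (1 + x) ^ r" by (rule Bernoulli_inequality[OF x1])
  have rx: "real r * (2 * real M / real n) \<le> 1/20"
  proof -
    have "real (40 * r * M) \<le> real n" using M by linarith
    hence a: "40 * real r * real M \<le> real n" by simp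
    have "real r * (2 * real M / real n) = (40 * real r * real M) / (20 * real n)" by simp
    also have "\<dots> \<le> real n / (20 * real n)" by (rule divide_right_mono[OF a]) simp
    also have "\<dots> = 1/20" using n by simp
    finally show ?thesis .
  qed
  have "19/20 * real n ^ r \<le> (1 + real r * x) * real n ^ r"
  proof (rule mult_right_mono)
    show "19/20 \<le> 1 + real r * x" using rx unfolding x_def by simp
  qed simp
  also have "\<dots> \<le> (1 + x) ^ r * real n ^ r" by (rule mult_right_mono[OF B]) simp
  also have "\<dots> = ((1 + x) * real n) ^ r" by (simp add: power_mult_distrib)
  also have "(1 + x) * real n = real n - 2 * real M" unfolding x_def using n by (simp add: algebra_simps)
  also have "real n - 2 * real M = real (n - 2 * M)" using M2 by (simp add: of_nat_diff)
  finally show ?thesis by (simp only: of_nat_power)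
qed

lemma good_count:
  fixes n r L N :: nat
  assumes r: "r \<ge> 1" and L: "L = 40 * r" and nb: "40 * L * N * r \<le> n"
    and d: "d \<in> cube r {1..N}" and T: "T \<subseteq> grid n r" and cT: "real n ^ r / 10 \<le> real (card T)"
  shows "real n ^ r / 40 \<le> real (card {x \<in> Vs n r L d. r \<le> card {j. j < L \<and> pt x d j \<in> T}})"
proof -
  define V where "V = Vs n r L d"
  define kc where "kc x = card {j. j < L \<and> pt x d j \<in> T}" for x
  define Gd where "Gd = {x \<in> V. r \<le> kc x}"
  define M where "M = L * N"
  have N1: "N \<ge> 1" using d r unfolding cube_def by auto
  have "0 < 40 * L * N * r" using N1 r L by simp
  hence n0: "n > 0" using nb by linarith
  have M40: "40 * r * M \<le> n" using nb unfolding M_def by (simp add: ac_simps)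
  have "40 * 1 * M \<le> 40 * r * M" using r by (intro mult_right_mono) auto
  hence M2: "2 * M \<le> n" using M40 by linarith
  define I where "I = cube r {M+1..n-M}"
  have finG: "finite (grid n r)" by (simp add: grid_cube finite_cube)
  have IG: "I \<subseteq> grid n r" unfolding I_def grid_cube cube_def by auto
  have finI: "finite I" by (rule finite_subset[OF IG finG])
  have cI: "card I = (n - 2*M) ^ r" unfolding I_def using M2 by (simp add: card_cube mult_2)
  have finT: "finite T" by (rule finite_subset[OF T finG])
  have "card T = card (T \<inter> I) + card (T - I)" by (rule card_Int_Diff[OF finT])
  moreover have "card (T - I) \<le> card (grid n r - I)" by (rule card_mono) (use finG T in auto)
  moreover have "card (grid n r - I) = n ^ r - card I" using card_Diff_subset[OF finI IG] by (simp add: card_grid)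
  ultimately have "card T \<le> card (T \<inter> I) + (n ^ r - (n - 2*M) ^ r)" using cI by linarith
  moreover have "(n - 2*M) ^ r \<le> n ^ r" by (simp add: power_mono)
  ultimately have "card T + (n - 2*M) ^ r \<le> card (T \<inter> I) + n ^ r" by linarith
  hence "real (card T + (n - 2*M) ^ r) \<le> real (card (T \<inter> I) + n ^ r)" by (simp only: of_nat_le_iff)
  hence "real (card T) \<le> real (card (T \<inter> I)) + (real n ^ r - real ((n - 2*M) ^ r))"
    by (simp only: of_nat_add of_nat_power)
  hence TI: "real (card (T \<inter> I)) \<ge> real n ^ r / 20" using inner_big[OF n0 M40 r] cT by linarith
  have finV: "finite V" unfolding V_def Vs_def by (rule finite_subset[OF _ finG]) auto
  have shift: "card (T \<inter> I) \<le> card {x \<in> V. pt x d j \<in> T}" if j: "j < L" for j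
  proof -
    define f where "f y = (\<lambda>i. y i - j * d i)" for y :: "nat \<Rightarrow> nat"
    have jd: "j * d i \<le> M" for i
    proof -
      have "d i \<le> N" using d unfolding cube_def by (cases "i < r") auto
      hence "j * d i \<le> L * N" using j by (intro mult_mono) auto
      thus ?thesis unfolding M_def .
    qed
    have jd': "(L - 1) * d i \<le> M" for i
    proof -
      have "d i \<le> N" using d unfolding cube_def by (cases "i < r") auto
      hence "(L - 1) * d i \<le> L * N" by (intro mult_mono) auto
      thus ?thesis unfolding M_def .
    qed
    have img: "f ` (T \<inter> I) \<subseteq> {x \<in> V. pt x d j \<in> T}"
    proof
      fix x assume "x \<in> f ` (T \<inter> I)"
      then obtain y where yT: "y \<in> T" and yI: "y \<in> I" and xy: "x = f y" by auto
      have yb: "M + 1 \<le> y i \<and> y i \<le> n - M" if "i < r" for i using yI that unfolding I_def cube_def by auto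
      have y0: "y i = 0" if "r \<le> i" for i using yI that unfolding I_def cube_def by auto
      have dz: "d i = 0" if "r \<le> i" for i using d that unfolding cube_def by auto
      have ptx: "pt x d j = y"
      proof
        fix i show "pt x d j i = y i" unfolding pt_def xy f_def using jd[of i] yb[of i] y0[of i] dz[of i]
          by (cases "i < r") auto
      qed
      have xV: "x \<in> V" unfolding V_def Vs_def grid_def
      proof (intro CollectI conjI allI impI)
        fix i assume i: "i < r"
        show "x i \<in> {1..n}" using yb[OF i] jd[of i] unfolding xy f_def by auto
        show "x i + (L - 1) * d i \<le> n" using yb[OF i] jd'[of i] unfolding xy f_def by auto
      next
        fix i assume "r \<le> i" thus "x i = 0" using y0 unfolding xy f_def by auto
      qed
      show "x \<in> {x \<in> V. pt x d j \<in> T}" using xV ptx yT by auto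
    qed
    have inj: "inj_on f (T \<inter> I)"
    proof (rule inj_onI)
      fix y y' assume y: "y \<in> T \<inter> I" and y': "y' \<in> T \<inter> I" and e: "f y = f y'"
      show "y = y'"
      proof
        fix i
        have e1: "y i - j * d i = y' i - j * d i" using fun_cong[OF e, of i] unfolding f_def .
        have jz: "j * d i \<le> z i" if "z \<in> I" for z
        proof (cases "i < r")
          case True
          hence "M + 1 \<le> z i" using that unfolding I_def cube_def by auto
          thus ?thesis using jd[of i] by linarith
        next
          case False
          hence "d i = 0" using d unfolding cube_def by auto
          thus ?thesis by simp
        qed
        have "j * d i \<le> y i" "j * d i \<le> y' i" using jz y y' by auto
        thus "y i = y' i" using e1 by simp
      qed
    qed
    show ?thesis by (rule card_inj_on_le[OF inj img]) (use finV in auto)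
  qed
  have kc_sum: "kc x = (\<Sum>j<L. if pt x d j \<in> T then 1 else 0)" for x
  proof -
    have "{j. j < L \<and> pt x d j \<in> T} = {j \<in> {..<L}. pt x d j \<in> T}" by auto
    hence "kc x = card {j \<in> {..<L}. pt x d j \<in> T}" unfolding kc_def by simp
    also have "\<dots> = (\<Sum>j<L. if pt x d j \<in> T then 1 else 0)" by (rule card_filter_sum) simp
    finally show ?thesis .
  qed
  have "(\<Sum>x\<in>V. kc x) = (\<Sum>j<L. \<Sum>x\<in>V. if pt x d j \<in> T then 1 else 0)"
    unfolding kc_sum by (rule sum.swap)
  also have "\<dots> = (\<Sum>j<L. card {x \<in> V. pt x d j \<in> T})"
    by (rule sum.cong[OF refl], rule card_filter_sum[symmetric, OF finV])
  finally have sumeq: "(\<Sum>x\<in>V. kc x) = (\<Sum>j<L. card {x \<in> V. pt x d j \<in> T})" .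
  have low: "L * card (T \<inter> I) \<le> (\<Sum>x\<in>V. kc x)"
  proof -
    have "L * card (T \<inter> I) = (\<Sum>j<L. card (T \<inter> I))" by simp
    also have "\<dots> \<le> (\<Sum>j<L. card {x \<in> V. pt x d j \<in> T})" by (rule sum_mono) (use shift in auto)
    finally show ?thesis using sumeq by simp
  qed
  have GV: "Gd \<subseteq> V" unfolding Gd_def by auto
  have kcL: "kc x \<le> L" for x
  proof -
    have "kc x \<le> card {..<L}" unfolding kc_def by (rule card_mono) auto
    thus ?thesis by simp
  qed
  have "(\<Sum>x\<in>V. kc x) = (\<Sum>x\<in>V - Gd. kc x) + (\<Sum>x\<in>Gd. kc x)"
    by (rule sum.subset_diff[OF GV finV])
  also have "(\<Sum>x\<in>V - Gd. kc x) \<le> (\<Sum>x\<in>V - Gd. r)" by (rule sum_mono) (auto simp: Gd_def)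
  also have "(\<Sum>x\<in>Gd. kc x) \<le> (\<Sum>x\<in>Gd. L)" by (rule sum_mono) (rule kcL)
  finally have up: "(\<Sum>x\<in>V. kc x) \<le> r * card (V - Gd) + L * card Gd" by (simp add: mult.commute)
  have "card (V - Gd) \<le> card (grid n r)" by (rule card_mono[OF finG]) (auto simp: V_def Vs_def)
  hence "card (V - Gd) \<le> n ^ r" by (simp add: card_grid)
  hence "r * card (V - Gd) \<le> r * n ^ r" by (rule mult_le_mono2)
  hence "L * card (T \<inter> I) \<le> r * n ^ r + L * card Gd" using low up by linarith
  hence "real (L * card (T \<inter> I)) \<le> real (r * n ^ r + L * card Gd)" by (simp only: of_nat_le_iff)
  hence "real L * real (card (T \<inter> I)) \<le> real r * real n ^ r + real L * real (card Gd)"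
    by (simp only: of_nat_add of_nat_mult of_nat_power)
  hence "40 * real r * real (card (T \<inter> I)) \<le> real r * real n ^ r + 40 * real r * real (card Gd)"
    using L by simp
  hence "real r * (40 * real (card (T \<inter> I))) \<le> real r * (real n ^ r + 40 * real (card Gd))"
    by (simp add: algebra_simps)
  hence "40 * real (card (T \<inter> I)) \<le> real n ^ r + 40 * real (card Gd)" using r
    by (subst (asm) mult_le_cancel_left_pos) auto
  thus ?thesis using TI unfolding Gd_def V_def kc_def by linarith
qed


lemma inv_sq_sum_aux: "N \<ge> 2 \<Longrightarrow> (\<Sum>q\<in>{2..N}. 1 / (real q)^2) \<le> 3/4 - 1 / real N"
proof (induction N rule: nat_induct_at_least)
  case base show ?case by simp
next
  case (Suc N)
  have N2: "real N \<ge> 2" using Suc.hyps by simp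
  have "(\<Sum>q\<in>{2..Suc N}. 1 / (real q)^2) = (\<Sum>q\<in>{2..N}. 1 / (real q)^2) + 1 / (real N + 1)^2"
    using Suc.hyps by (simp add: atLeastAtMostSuc_conv)
  also have "\<dots> \<le> 3/4 - 1 / real N + 1 / (real N + 1)^2" using Suc.IH by simp
  finally have X: "(\<Sum>q\<in>{2..Suc N}. 1 / (real q)^2) \<le> 3/4 - 1 / real N + 1 / (real N + 1)^2" .
  have h3: "1 / (real N + 1)^2 \<le> 1 / real N - 1 / (real N + 1)"
  proof -
    have e: "1 / real N - 1 / (real N + 1) = 1 / (real N * (real N + 1))" using N2 by (simp add: field_simps)
    have "1 / (real N + 1)^2 \<le> 1 / (real N * (real N + 1))"
      by (rule divide_left_mono) (use N2 in \<open>auto simp: power2_eq_square\<close>)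
    thus ?thesis using e by simp
  qed
  have sN: "real (Suc N) = real N + 1" by simp
  show ?case using X h3 by (simp only: sN)
qed

lemma inv_sq_sum: "(\<Sum>q\<in>{2..N}. 1 / (real q)^2) \<le> 3/4"
proof (cases "N \<ge> 2")
  case True
  have "1 / real N \<ge> 0" by simp
  thus ?thesis using inv_sq_sum_aux[OF True] by linarith
next
  case False thus ?thesis by simp
qed

definition CP :: "nat \<Rightarrow> (nat \<times> nat) set" where
  "CP N = {(a,b). a \<in> {1..N} \<and> b \<in> {1..N} \<and> coprime a b}"

lemma card_mult_le: assumes q: "q \<ge> 1" shows "real (card {a \<in> {1..N}. q dvd a}) \<le> real N / real q"
proof -
  have "card {a \<in> {1..N}. q dvd a} \<le> card {1..N div q}"
  proof (rule card_inj_on_le[of "\<lambda>a. a div q"])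
    show "inj_on (\<lambda>a. a div q) {a \<in> {1..N}. q dvd a}"
      by (rule inj_onI) (auto elim!: dvdE simp: q)
    show "(\<lambda>a. a div q) ` {a \<in> {1..N}. q dvd a} \<subseteq> {1..N div q}"
    proof
      fix k assume "k \<in> (\<lambda>a. a div q) ` {a \<in> {1..N}. q dvd a}"
      then obtain a where a: "a \<in> {1..N}" "q dvd a" "k = a div q" by auto
      then obtain c where c: "a = q * c" by (auto elim: dvdE)
      have "k = c" using a c q by simp
      moreover have "c \<ge> 1" using a c by (cases c) auto
      moreover have "c \<le> N div q" using a c q by (metis atLeastAtMost_iff div_le_mono nonzero_mult_div_cancel_left not_one_le_zero)
      ultimately show "k \<in> {1..N div q}" by simp
    qed
  qed simp
  hence "card {a \<in> {1..N}. q dvd a} \<le> N div q" by simp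
  hence "real (card {a \<in> {1..N}. q dvd a}) \<le> real (N div q)" by simp
  also have "\<dots> \<le> real N / real q" using q by (simp add: of_nat_div_le_of_nat)
  finally show ?thesis .
qed

lemma card_CP: "real (card (CP N)) \<ge> real N ^ 2 / 4"
proof -
  define Sq where "Sq = {1..N} \<times> {1..N}"
  define Mq where "Mq q = {a \<in> {1..N}. q dvd a}" for q
  have CPS: "CP N \<subseteq> Sq" unfolding CP_def Sq_def by auto
  have finS: "finite Sq" unfolding Sq_def by simp
  have bad: "Sq - CP N \<subseteq> (\<Union>q\<in>{2..N}. Mq q \<times> Mq q)"
  proof
    fix z assume z: "z \<in> Sq - CP N"
    obtain a b where zab: "z = (a,b)" by (cases z)
    have ab: "z = (a,b)" "a \<in> {1..N}" "b \<in> {1..N}" "\<not> coprime a b"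
      using z zab unfolding Sq_def CP_def by auto
    define q where "q = gcd a b"
    have q1: "q \<noteq> 1" using ab(4) unfolding q_def by (simp add: coprime_iff_gcd_eq_1)
    have "q > 0" using ab unfolding q_def by simp
    hence q2: "q \<ge> 2" using q1 by linarith
    have "q \<le> a" unfolding q_def using ab(2) by (simp add: gcd_le1_nat)
    hence qN: "q \<le> N" using ab(2) by simp
    have "q dvd a" "q dvd b" unfolding q_def by auto
    thus "z \<in> (\<Union>q\<in>{2..N}. Mq q \<times> Mq q)" using ab q2 qN unfolding Mq_def by auto
  qed
  have finM: "finite (Mq q)" for q unfolding Mq_def by simp
  have "card (Sq - CP N) \<le> card (\<Union>q\<in>{2..N}. Mq q \<times> Mq q)"
    by (rule card_mono[OF _ bad]) (simp add: finM)
  also have "\<dots> \<le> (\<Sum>q\<in>{2..N}. card (Mq q \<times> Mq q))" by (rule card_UN_le) simp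
  finally have "real (card (Sq - CP N)) \<le> real (\<Sum>q\<in>{2..N}. card (Mq q \<times> Mq q))" by (simp only: of_nat_le_iff)
  also have "\<dots> = (\<Sum>q\<in>{2..N}. real (card (Mq q)) ^ 2)" by (simp add: card_cartesian_product power2_eq_square)
  also have "\<dots> \<le> (\<Sum>q\<in>{2..N}. (real N / real q) ^ 2)"
  proof (rule sum_mono, rule power_mono)
    fix q assume "q \<in> {2..N}"
    thus "real (card (Mq q)) \<le> real N / real q" unfolding Mq_def by (intro card_mult_le) auto
  qed simp
  also have "\<dots> = real N ^ 2 * (\<Sum>q\<in>{2..N}. 1 / (real q)^2)"
    by (simp add: sum_distrib_left power_divide)
  also have "\<dots> \<le> real N ^ 2 * (3/4)" by (rule mult_left_mono[OF inv_sq_sum]) simp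
  finally have b: "real (card (Sq - CP N)) \<le> real N ^ 2 * (3/4)" .
  have "card (Sq - CP N) = card Sq - card (CP N)"
    by (rule card_Diff_subset[OF finite_subset[OF CPS finS] CPS])
  moreover have "card (CP N) \<le> card Sq" by (rule card_mono[OF finS CPS])
  moreover have "card Sq = N ^ 2" unfolding Sq_def by (simp add: power2_eq_square)
  ultimately have "real (card Sq - card (CP N)) = real N ^ 2 - real (card (CP N))" by (simp add: of_nat_diff)
  thus ?thesis using b \<open>card (Sq - CP N) = card Sq - card (CP N)\<close> by linarith
qed

lemma card_Dset:
  assumes r: "r \<ge> 2"
  shows "real (card (Dset N r)) \<ge> real N ^ r / 4"
proof -
  define \<Phi> where "\<Phi> = (\<lambda>((a::nat,b::nat), e::nat\<Rightarrow>nat). (\<lambda>i. if i = 0 then a else if i = 1 then b else e (i - 2)))"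
  have img: "\<Phi> ` (CP N \<times> cube (r-2) {1..N}) \<subseteq> Dset N r"
  proof
    fix z assume "z \<in> \<Phi> ` (CP N \<times> cube (r-2) {1..N})"
    then obtain a b e where abe: "(a,b) \<in> CP N" "e \<in> cube (r-2) {1..N}" "z = \<Phi> ((a,b),e)" by auto
    have "z \<in> cube r {1..N}" unfolding cube_def
    proof (intro CollectI conjI allI impI)
      fix i assume "i < r" thus "z i \<in> {1..N}" using abe unfolding \<Phi>_def CP_def cube_def by auto
    next
      fix i assume "r \<le> i" thus "z i = 0" using abe r unfolding \<Phi>_def CP_def cube_def by auto
    qed
    moreover have "coprime (z 0) (z 1)" using abe unfolding \<Phi>_def CP_def by auto
    ultimately show "z \<in> Dset N r" unfolding Dset_def by simp
  qed
  have inj: "inj_on \<Phi> (CP N \<times> cube (r-2) {1..N})"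
  proof (rule inj_onI)
    fix z z' assume z: "z \<in> CP N \<times> cube (r-2) {1..N}" and z': "z' \<in> CP N \<times> cube (r-2) {1..N}"
      and e: "\<Phi> z = \<Phi> z'"
    obtain a b f where zd: "z = ((a,b),f)" by (metis prod.collapse)
    obtain a' b' f' where zd': "z' = ((a',b'),f')" by (metis prod.collapse)
    have "a = a'" using fun_cong[OF e, of 0] zd zd' unfolding \<Phi>_def by simp
    moreover have "b = b'" using fun_cong[OF e, of 1] zd zd' unfolding \<Phi>_def by simp
    moreover have "f = f'"
    proof
      fix i show "f i = f' i" using fun_cong[OF e, of "i+2"] zd zd' unfolding \<Phi>_def by simp
    qed
    ultimately show "z = z'" using zd zd' by simp
  qed
  have finD: "finite (Dset N r)" unfolding Dset_def by (rule finite_subset[OF _ finite_cube[of "{1..N}" r]]) auto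
  have "card (CP N \<times> cube (r-2) {1..N}) \<le> card (Dset N r)"
    by (rule card_inj_on_le[OF inj img finD])
  hence "card (CP N) * N ^ (r-2) \<le> card (Dset N r)" by (simp add: card_cartesian_product card_cube)
  hence "real (card (CP N)) * real N ^ (r-2) \<le> real (card (Dset N r))"
    by (metis of_nat_le_iff of_nat_mult of_nat_power)
  moreover have "real N ^ 2 / 4 * real N ^ (r-2) \<le> real (card (CP N)) * real N ^ (r-2)"
    by (rule mult_right_mono[OF card_CP]) simp
  moreover have "real N ^ 2 / 4 * real N ^ (r-2) = real N ^ r / 4"
  proof -
    have "r = 2 + (r - 2)" using r by simp
    hence "real N ^ r = real N ^ 2 * real N ^ (r-2)" by (metis power_add)
    thus ?thesis by simp
  qed
  ultimately show ?thesis by linarith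
qed


lemma card_fibres:
  assumes fin: "finite A" and fb: "\<And>y. y \<in> f ` A \<Longrightarrow> card {a \<in> A. f a = y} \<le> L"
  shows "card A \<le> L * card (f ` A)"
proof -
  have "A = (\<Union>y\<in>f ` A. {a \<in> A. f a = y})" by auto
  hence "card A = card (\<Union>y\<in>f ` A. {a \<in> A. f a = y})" by simp
  also have "\<dots> \<le> (\<Sum>y\<in>f ` A. card {a \<in> A. f a = y})" by (rule card_UN_le) (use fin in simp)
  also have "\<dots> \<le> (\<Sum>y\<in>f ` A. L)" by (rule sum_mono) (rule fb)
  finally show ?thesis by (simp add: mult.commute)
qed

lemma lower_count:
  fixes n r L N :: nat
  assumes r: "r \<ge> 2" and L: "L = 40 * r" and nb: "40 * L * N * r \<le> n" and N1: "N \<ge> 1"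
    and T: "T \<subseteq> grid n r" and cT: "real n ^ r / 10 \<le> real (card T)"
  shows "real N ^ r * real n ^ r / (160 * real L) \<le> real (induced_edges n r T)"
proof -
  define Good where "Good d = {x \<in> Vs n r L d. r \<le> card {j. j < L \<and> pt x d j \<in> T}}" for d
  define Sg where "Sg = Sigma (Dset N r) Good"
  define JJ where "JJ z = (SOME J. J \<subseteq> {j. j < L \<and> pt (snd z) (fst z) j \<in> T} \<and> card J = r)" for z :: "(nat \<Rightarrow> nat) \<times> (nat \<Rightarrow> nat)"
  define E where "E z = pt (snd z) (fst z) ` JJ z" for z
  have r1: "r \<ge> 1" using r by simp
  have finG: "finite (grid n r)" by (simp add: grid_cube finite_cube)
  have finT: "finite T" by (rule finite_subset[OF T finG])
  have finD: "finite (Dset N r)" unfolding Dset_def by (rule finite_subset[OF _ finite_cube[of "{1..N}" r]]) auto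
  have finGood: "finite (Good d)" for d unfolding Good_def Vs_def by (rule finite_subset[OF _ finG]) auto
  have finSg: "finite Sg" unfolding Sg_def using finD finGood by auto
  have DC: "d \<in> cube r {1..N}" if "d \<in> Dset N r" for d using that unfolding Dset_def by auto
  have JJp: "JJ z \<subseteq> {j. j < L \<and> pt (snd z) (fst z) j \<in> T} \<and> card (JJ z) = r" if z: "z \<in> Sg" for z
  proof -
    have "r \<le> card {j. j < L \<and> pt (snd z) (fst z) j \<in> T}" using z unfolding Sg_def Good_def by auto
    then obtain J where "J \<subseteq> {j. j < L \<and> pt (snd z) (fst z) j \<in> T}" "card J = r"
      by (rule obtain_subset_with_card_n)
    hence "\<exists>J. J \<subseteq> {j. j < L \<and> pt (snd z) (fst z) j \<in> T} \<and> card J = r" by blast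
    thus ?thesis unfolding JJ_def by (rule someI_ex)
  qed
  have Ep: "E z \<in> Hedges n r \<and> E z \<subseteq> T" if z: "z \<in> Sg" for z
  proof -
    have zz: "fst z \<in> Dset N r" "snd z \<in> Vs n r L (fst z)" using z unfolding Sg_def Good_def by auto
    have "E z \<in> Hedges n r" unfolding E_def
      by (rule window_edge[OF zz(2) DC[OF zz(1)] r1]) (use JJp[OF z] in auto)
    moreover have "E z \<subseteq> T" unfolding E_def using JJp[OF z] by auto
    ultimately show ?thesis by simp
  qed
  have imgsub: "E ` Sg \<subseteq> {S \<in> Hedges n r. S \<subseteq> T}" using Ep by auto
  have finH: "finite {S \<in> Hedges n r. S \<subseteq> T}"
    by (rule finite_subset[of _ "Pow T"]) (use finT in auto)
  have fib: "card {z \<in> Sg. E z = S0} \<le> L" if S0: "S0 \<in> E ` Sg" for S0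
  proof -
    obtain z0 where z0: "z0 \<in> Sg" "E z0 = S0" using S0 by auto
    have cS0: "card S0 = r" using Ep[OF z0(1)] z0(2) unfolding Hedges_def by auto
    have finS0: "finite S0" using cS0 r by (metis card.infinite not_numeral_le_zero)
    have "\<not> (\<forall>x\<in>S0. \<forall>y\<in>S0. x = y)" using card_le_Suc0_iff_eq[OF finS0] cS0 r by auto
    then obtain s s' where ss: "s \<in> S0" "s' \<in> S0" "s \<noteq> s'" by blast
    define d0 where "d0 = fst z0"
    have rep: "\<exists>j. j < L \<and> y = pt (snd z) (fst z) j" if "z \<in> Sg" "E z = S0" "y \<in> S0" for z y
    proof -
      have "y \<in> pt (snd z) (fst z) ` JJ z" using that unfolding E_def by simp
      then obtain j where "j \<in> JJ z" "y = pt (snd z) (fst z) j" by auto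
      thus ?thesis using JJp[OF that(1)] by auto
    qed
    have "{z \<in> Sg. E z = S0} \<subseteq> (\<lambda>j. (d0, \<lambda>k. s k - j * d0 k)) ` {..<L}"
    proof
      fix z assume zin: "z \<in> {z \<in> Sg. E z = S0}"
      hence zS: "z \<in> Sg" "E z = S0" by auto
      obtain j where j: "j < L" "s = pt (snd z) (fst z) j" using rep[OF zS ss(1)] by blast
      obtain j' where j': "j' < L" "s' = pt (snd z) (fst z) j'" using rep[OF zS ss(2)] by blast
      obtain i where i: "i < L" "s = pt (snd z0) (fst z0) i" using rep[OF z0 ss(1)] by blast
      obtain i' where i': "i' < L" "s' = pt (snd z0) (fst z0) i'" using rep[OF z0 ss(2)] by blast
      have dz: "fst z \<in> Dset N r" using zS unfolding Sg_def by auto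
      have dz0: "fst z0 \<in> Dset N r" using z0 unfolding Sg_def by auto
      have "fst z = fst z0" by (rule dir_unique[OF dz dz0 r j(2) i(2) j'(2) i'(2) ss(3)])
      hence fz: "fst z = d0" unfolding d0_def by simp
      have "snd z = (\<lambda>k. s k - j * d0 k)"
      proof
        fix k show "snd z k = s k - j * d0 k" using j(2) fz unfolding pt_def by simp
      qed
      hence "z = (d0, \<lambda>k. s k - j * d0 k)" using fz by (metis prod.collapse)
      thus "z \<in> (\<lambda>j. (d0, \<lambda>k. s k - j * d0 k)) ` {..<L}" using j(1) by blast
    qed
    hence "card {z \<in> Sg. E z = S0} \<le> card ((\<lambda>j. (d0, \<lambda>k. s k - j * d0 k)) ` {..<L})"
      by (rule card_mono[rotated]) simp
    also have "\<dots> \<le> card {..<L}" by (rule card_image_le) simp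
    finally show ?thesis by simp
  qed
  have c1: "card Sg \<le> L * card (E ` Sg)" by (rule card_fibres[OF finSg fib])
  have c2: "card (E ` Sg) \<le> induced_edges n r T" unfolding induced_edges_def by (rule card_mono[OF finH imgsub])
  have cSg: "card Sg = (\<Sum>d\<in>Dset N r. card (Good d))" unfolding Sg_def
    by (rule card_SigmaI[OF finD]) (use finGood in blast)
  have gd: "real n ^ r / 40 \<le> real (card (Good d))" if "d \<in> Dset N r" for d
    unfolding Good_def by (rule good_count[OF r1 L nb DC[OF that] T cT])
  have "real (card (Dset N r)) * (real n ^ r / 40) = (\<Sum>d\<in>Dset N r. real n ^ r / 40)" by simp
  also have "\<dots> \<le> (\<Sum>d\<in>Dset N r. real (card (Good d)))" by (rule sum_mono) (rule gd)
  also have "\<dots> = real (card Sg)" unfolding cSg by simp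
  finally have s1: "real (card (Dset N r)) * (real n ^ r / 40) \<le> real (card Sg)" .
  have s0: "real N ^ r / 4 * (real n ^ r / 40) \<le> real (card (Dset N r)) * (real n ^ r / 40)"
    by (rule mult_right_mono[OF card_Dset[OF r]]) simp
  have "real (card Sg) \<le> real L * real (induced_edges n r T)"
    using c1 c2 by (metis (no_types, opaque_lifting) le_trans mult_le_mono2 of_nat_le_iff of_nat_mult)
  hence "real N ^ r / 4 * (real n ^ r / 40) \<le> real L * real (induced_edges n r T)" using s0 s1 by linarith
  moreover have "real L > 0" using L r by simp
  ultimately show ?thesis by (simp add: field_simps)
qed


lemma num1: "r \<ge> 8 \<Longrightarrow> 3200 * r^2 \<le> (8::nat) ^ r"
proof (induction r rule: nat_induct_at_least)
  case base show ?case by simp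
next
  case (Suc r)
  have "8 * r \<le> r * r" using Suc.hyps by (intro mult_right_mono) auto
  moreover have "Suc r * Suc r = r * r + 2 * r + 1" by simp
  ultimately have "(Suc r)^2 \<le> 8 * r^2" unfolding power2_eq_square using Suc.hyps by linarith
  hence "3200 * (Suc r)^2 \<le> 8 * (3200 * r^2)" by simp
  also have "\<dots> \<le> 8 * 8 ^ r" using Suc.IH by simp
  finally show ?case by simp
qed

lemma num2: "r \<ge> 3 \<Longrightarrow> 64 * r \<le> (10::nat) ^ r"
proof (induction r rule: nat_induct_at_least)
  case base show ?case by simp
next
  case (Suc r)
  have "64 * Suc r \<le> 10 * (64 * r)" using Suc.hyps by simp
  also have "\<dots> \<le> 10 * 10 ^ r" using Suc.IH by simp
  finally show ?case by simp
qed

lemma num3: "r \<ge> 200 \<Longrightarrow> (2000 * real r)^2 \<le> (6/5::real) ^ r"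
proof (induction r rule: nat_induct_at_least)
  case base
  have a: "(2::real) \<le> (6/5)^5" by (simp add: power_divide)
  have "(2::real)^40 \<le> ((6/5)^5)^40" by (rule power_mono[OF a]) simp
  also have "((6/5::real)^5)^40 = (6/5)^200" by (simp flip: power_mult)
  finally have "(2::real)^40 \<le> (6/5)^200" .
  moreover have "(2000 * real 200)^2 \<le> (2::real)^40" by simp
  ultimately show ?case by linarith
next
  case (Suc r)
  have r: "real r \<ge> 200" using Suc.hyps by simp
  have "(2000 * real (Suc r))^2 = (2000 * (real r + 1))^2" by simp
  also have "\<dots> = 2000^2 * (real r + 1)^2" by (rule power_mult_distrib)
  also have "\<dots> \<le> 2000^2 * (6/5 * (real r)^2)"
  proof (rule mult_left_mono)
    have "200 * real r \<le> real r * real r" using r by (intro mult_right_mono) auto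
    hence "5 + real r * 10 \<le> real r * real r" using r by linarith
    thus "(real r + 1)^2 \<le> 6/5 * (real r)^2" unfolding power2_eq_square by (simp add: algebra_simps)
  qed simp
  also have "\<dots> = 6/5 * (2000 * real r)^2" by (simp add: power_mult_distrib)
  also have "\<dots> \<le> 6/5 * (6/5) ^ r" using Suc.IH by simp
  finally show ?case by simp
qed

lemma num4: "2 powr (1/100) \<le> (101/100::real)"
proof -
  have a: "(2::real) \<le> (101/100) ^ 100"
    using Bernoulli_inequality[of "1/100::real" 100] by simp
  have "(2::real) powr (1/100) \<le> ((101/100) ^ 100) powr (1/100)"
    by (rule powr_mono2) (use a in auto)
  also have "((101/100::real) ^ 100) powr (1/100) = 101/100"
  proof -
    have "((101/100::real) ^ 100) powr (1/100) = ((101/100) powr (real 100)) powr (1/100)"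
      by (subst powr_realpow) auto
    also have "\<dots> = (101/100) powr (real 100 * (1/100))" by (rule powr_powr)
    also have "\<dots> = 101/100" by simp
    finally show ?thesis .
  qed
  finally show ?thesis .
qed


lemma upper_numeric:
  fixes l :: real and r :: nat
  assumes r: "r \<ge> 200" and l0: "0 \<le> l" and lb: "l \<le> (101/100)^r"
  shows "8^r * l^(r+1) * 10^(r+2) * 2^(3*r^2 + 3*r) * fact (r+1) \<le> (10::real)^(r^2)"
proof -
  define c where "c = (101/100::real)"
  have P1: "l^(r+1) \<le> c^(r^2) * c^r"
  proof -
    have "l^(r+1) \<le> (c^r)^(r+1)" unfolding c_def by (rule power_mono[OF lb l0])
    also have "\<dots> = c^(r^2) * c^r" by (simp add: power2_eq_square power_mult[symmetric] power_add algebra_simps)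
    finally show ?thesis .
  qed
  have P2: "fact (r+1) \<le> (2 * real r)^(2*r)"
  proof -
    have "(fact (r+1) :: real) \<le> real ((r+1)^(r+1))" by (rule fact_le_power)
    also have "\<dots> = (real r + 1)^(r+1)" by (simp only: of_nat_power of_nat_add of_nat_1)
    also have "\<dots> \<le> (2 * real r)^(r+1)" by (rule power_mono) (use r in auto)
    also have "\<dots> \<le> (2 * real r)^(2*r)" by (rule power_increasing) (use r in auto)
    finally show ?thesis .
  qed
  have P3: "(2::real)^(3*r^2 + 3*r) = 8^(r^2) * 8^r"
    by (simp add: power_add power_mult)
  have P4: "(10::real)^(r+2) \<le> 10^r * 10^r"
  proof -
    have "(10::real)^2 \<le> 10^r" by (rule power_increasing) (use r in auto)
    thus ?thesis by (simp add: power_add)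
  qed
  have "8^r * l^(r+1) * 10^(r+2) * 2^(3*r^2 + 3*r) * fact (r+1)
      \<le> 8^r * (c^(r^2) * c^r) * (10^r * 10^r) * (8^(r^2) * 8^r) * (2 * real r)^(2*r)"
    unfolding P3 by (intro mult_mono P1 P2 P4 order_refl) (auto simp: c_def l0)
  also have "\<dots> = (8 * c)^(r^2) * ((8 * c * 10 * 10 * 8)^r * (2 * real r)^(2*r))"
  proof -
    have E1: "(8 * c * 10 * 10 * 8)^r = 8^r * c^r * 10^r * 10^r * 8^r" by (simp only: power_mult_distrib)
    have E2: "(8 * c)^(r^2) = 8^(r^2) * c^(r^2)" by (simp only: power_mult_distrib)
    have acl: "\<And>A B C D E F G H::real. A*(B*C)*(D*E)*(F*G)*H = (F*B)*((A*C*D*E*G)*H)"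
      by (simp add: ac_simps)
    show ?thesis unfolding E1 E2 by (rule acl)
  qed
  also have "\<dots> \<le> (8 * c)^(r^2) * (6/5)^(r^2)"
  proof (rule mult_left_mono)
    have "(8 * c * 10 * 10 * 8)^r * (2 * real r)^(2*r) \<le> (1000^2)^r * (2 * real r)^(2*r)"
      unfolding c_def by (intro mult_right_mono power_mono) auto
    also have "(1000^2)^r * (2 * real r)^(2*r) = ((2000 * real r)^2)^r"
    proof -
      have h: "(2 * real r)^(2*r) = ((2 * real r)^2)^r" by (simp add: power_mult)
      have "(1000^2)^r * (2 * real r)^(2*r) = (1000^2)^r * ((2 * real r)^2)^r" unfolding h ..
      also have "\<dots> = (1000^2 * (2 * real r)^2)^r" by (rule power_mult_distrib[symmetric])
      also have "1000^2 * (2 * real r)^2 = (2000 * real r)^2" by (simp add: power_mult_distrib)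
      finally show ?thesis .
    qed
    also have "\<dots> \<le> ((6/5)^r)^r" by (rule power_mono[OF num3[OF r]]) simp
    also have "((6/5::real)^r)^r = (6/5)^(r^2)" by (simp add: power_mult[symmetric] power2_eq_square)
    finally show "(8 * c * 10 * 10 * 8)^r * (2 * real r)^(2*r) \<le> (6/5)^(r^2)" .
  qed (simp add: c_def)
  finally have "8^r * l^(r+1) * 10^(r+2) * 2^(3*r^2 + 3*r) * fact (r+1) \<le> (8 * c)^(r^2) * (6/5)^(r^2)" .
  also have "\<dots> = (8 * c * (6/5))^(r^2)" by (rule power_mult_distrib[symmetric])
  also have "\<dots> \<le> 10^(r^2)" unfolding c_def by (rule power_mono) auto
  finally show ?thesis .
qed


lemma lower_numeric:
  fixes r :: nat and l n :: real
  assumes r: "r \<ge> 8" and l: "l \<ge> 1"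
  shows "(3200 * real r^2)^r * (6400 * real r) \<le> 10^(r+2) * 2^(3*r^2 + 3*r) * fact (r+1) * l"
proof -
  have a: "3200 * real r^2 \<le> 8^r"
  proof -
    have "real (3200 * r^2) \<le> real (8^r)" using num1[OF r] by (simp only: of_nat_le_iff)
    thus ?thesis by simp
  qed
  have b: "6400 * real r \<le> 10^(r+2)"
  proof -
    have "real (64 * r) \<le> real (10^r)" using num2[of r] r by (simp only: of_nat_le_iff)
    hence "64 * real r \<le> 10^r" by simp
    thus ?thesis by (simp add: power_add)
  qed
  have "(3200 * real r^2)^r \<le> (8^r)^r" by (rule power_mono[OF a]) simp
  also have "((8::real)^r)^r = 8^(r^2)" by (simp add: power_mult[symmetric] power2_eq_square)
  also have "(8::real)^(r^2) \<le> 2^(3*r^2 + 3*r)"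
  proof -
    have "(8::real)^(r^2) = 2^(3*r^2)" by (simp add: power_mult)
    also have "\<dots> \<le> 2^(3*r^2 + 3*r)" by (rule power_increasing) auto
    finally show ?thesis .
  qed
  finally have c: "(3200 * real r^2)^r \<le> 2^(3*r^2 + 3*r)" .
  have "(3200 * real r^2)^r * (6400 * real r) \<le> 2^(3*r^2 + 3*r) * 10^(r+2)"
    by (rule mult_mono[OF c b]) auto
  also have "\<dots> = 10^(r+2) * 2^(3*r^2 + 3*r) * 1 * 1" by simp
  also have "\<dots> \<le> 10^(r+2) * 2^(3*r^2 + 3*r) * fact (r+1) * l"
  proof -
    have f1: "(1::real) \<le> fact (r+1)" by (rule fact_ge_1)
    show ?thesis by (intro mult_mono order_refl f1 l) auto
  qed
  finally show ?thesis .
qed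

lemma log16: "n \<ge> 16 \<Longrightarrow> log 2 (real n) \<ge> 4"
proof -
  assume "n \<ge> 16"
  hence "log 2 (real n) \<ge> log 2 (2^4)" by (subst log_le_cancel_iff) auto
  moreover have "log 2 ((2::real)^4) = 4" using log_pow_cancel[of "2::real" 4] by simp
  ultimately show ?thesis by simp
qed

lemma log_le_n: "n \<ge> 1 \<Longrightarrow> log 2 (real n) \<le> real n"
proof -
  assume n: "n \<ge> 1"
  have "real n \<le> 2 ^ n" using less_exp[of n] by (metis of_nat_le_iff of_nat_numeral of_nat_power less_imp_le)
  hence "log 2 (real n) \<le> log 2 (2 ^ n)" using n by (subst log_le_cancel_iff) auto
  also have "log 2 ((2::real) ^ n) = real n" by simp
  finally show ?thesis .
qed


theorem lemma6p1:
  "\<exists>K::real. \<exists>N0::nat. \<forall>n r :: nat. \<forall>T.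
     n \<ge> N0 \<and>
     real r \<ge> K * log 2 (log 2 n) \<and>
     real r \<le> 0.01 * sqrt (log 2 n) / log 2 (log 2 n) \<and>
     T \<subseteq> grid n r \<and>
     real (card T) \<ge> 0.1 * real n ^ r
     \<longrightarrow>
     real (induced_edges n r T) \<ge>
        real n ^ (2*r) / (10 ^ (r+2) * 2 ^ (3*r^2 + 3*r) * fact (r+1) * log 2 n)
     \<and> real n ^ (2*r) / (10 ^ (r+2) * 2 ^ (3*r^2 + 3*r) * fact (r+1) * log 2 n)
         \<ge> (1 / 10 ^ (r^2)) * real (card (Hedges n r))"
proof (intro exI[of _ "100::real"] exI[of _ "16::nat"] allI impI)
  fix n r :: nat and T
  assume H: "16 \<le> n \<and> 100 * log 2 (log 2 (real n)) \<le> real r \<and>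
     real r \<le> 0.01 * sqrt (log 2 (real n)) / log 2 (log 2 (real n)) \<and>
     T \<subseteq> grid n r \<and> 0.1 * real n ^ r \<le> real (card T)"
  have n16: "n \<ge> 16" and rlo: "100 * log 2 (log 2 (real n)) \<le> real r"
    and rhi: "real r \<le> 0.01 * sqrt (log 2 (real n)) / log 2 (log 2 (real n))"
    and T: "T \<subseteq> grid n r" and cT0: "0.1 * real n ^ r \<le> real (card T)" using H by auto
  define l where "l = log 2 (real n)"
  define LL where "LL = log 2 l"
  have l4: "l \<ge> 4" unfolding l_def by (rule log16[OF n16])
  have LL2: "LL \<ge> 2"
  proof -
    have "log 2 l \<ge> log 2 (2^2)" using l4 by (subst log_le_cancel_iff) auto
    moreover have "log 2 ((2::real)^2) = 2" using log_pow_cancel[of "2::real" 2] by simp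
    ultimately show ?thesis unfolding LL_def by simp
  qed
  have rlo': "100 * LL \<le> real r" using rlo unfolding LL_def l_def .
  have rhi': "real r \<le> 0.01 * sqrt l / LL" using rhi unfolding LL_def l_def .
  have r200: "r \<ge> 200" using rlo' LL2 by linarith
  have r2: "r \<ge> 2" and r8: "r \<ge> 8" using r200 by auto
  have "real r \<le> 0.01 * sqrt l / 2"
  proof -
    have "0.01 * sqrt l / LL \<le> 0.01 * sqrt l / 2" using LL2 l4 by (intro divide_left_mono) auto
    thus ?thesis using rhi' by linarith
  qed
  hence "(real r)^2 \<le> (0.01 * sqrt l / 2)^2" by (intro power_mono) auto
  also have "\<dots> = l / 40000" using l4 by (simp add: power_divide power_mult_distrib)
  finally have rl: "(real r)^2 \<le> l / 40000" .
  have ln: "l \<le> real n" unfolding l_def by (rule log_le_n) (use n16 in simp)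
  have rn: "40000 * (real r)^2 \<le> real n" using rl ln by linarith
  have n0: "real n > 0" using n16 by simp
  have lpow: "l \<le> (101/100)^r"
  proof -
    have "l = 2 powr LL" unfolding LL_def using l4 by simp
    also have "\<dots> \<le> 2 powr (real r / 100)" using rlo' by (intro powr_mono) auto
    also have "\<dots> = (2 powr (1/100)) powr (real r)" by (simp add: powr_powr)
    also have "\<dots> = (2 powr (1/100)) ^ r" by (rule powr_realpow) simp
    also have "\<dots> \<le> (101/100)^r" by (rule power_mono[OF num4]) simp
    finally show ?thesis .
  qed
  define D where "D = 10 ^ (r+2) * 2 ^ (3*r^2 + 3*r) * fact (r+1) * l"
  have Dpos: "D > 0" unfolding D_def using l4 by simp
  have cH: "real (card (Hedges n r)) \<le> 2^(r-1) * real n ^ (2*r) * Hs n ^ r" by (rule card_Hedges_bound[OF r2])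
  also have "\<dots> \<le> 2^(r-1) * real n ^ (2*r) * (4 * l) ^ r"
  proof -
    have Hs0: "0 \<le> Hs n" unfolding Hs_def by (rule sum_nonneg) simp
    have Hsb: "Hs n \<le> 4 * l" unfolding l_def by (rule Hs_bound) (use n16 in simp)
    show ?thesis by (intro mult_left_mono power_mono Hsb Hs0) simp
  qed
  also have "\<dots> \<le> 8^r * l^r * real n ^ (2*r)"
  proof -
    have "(2::real)^(r-1) \<le> 2^r" by (rule power_increasing) auto
    hence "(2::real)^(r-1) * (4 * l)^r \<le> 2^r * (4 * l)^r" by (rule mult_right_mono) (use l4 in simp)
    also have "\<dots> = (2 * (4 * l))^r" by (rule power_mult_distrib[symmetric])
    also have "\<dots> = (8 * l)^r" by simp
    also have "\<dots> = 8^r * l^r" by (rule power_mult_distrib)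
    finally have "(2::real)^(r-1) * (4 * l)^r \<le> 8^r * l^r" .
    hence "(2::real)^(r-1) * (4 * l)^r * real n ^ (2*r) \<le> 8^r * l^r * real n ^ (2*r)"
      by (rule mult_right_mono) simp
    thus ?thesis by (simp add: ac_simps)
  qed
  finally have cH2: "real (card (Hedges n r)) \<le> 8^r * l^r * real n ^ (2*r)" .
  have UN: "8^r * l^(r+1) * 10^(r+2) * 2^(3*r^2 + 3*r) * fact (r+1) \<le> (10::real)^(r^2)"
    by (rule upper_numeric[OF r200 _ lpow]) (use l4 in simp)
  have "real (card (Hedges n r)) * D \<le> 8^r * l^r * real n ^ (2*r) * D"
    by (rule mult_right_mono[OF cH2]) (use Dpos in simp)
  also have "\<dots> = (8^r * l^(r+1) * 10^(r+2) * 2^(3*r^2 + 3*r) * fact (r+1)) * real n ^ (2*r)"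
    unfolding D_def by (simp add: ac_simps)
  also have "\<dots> \<le> 10^(r^2) * real n ^ (2*r)" by (rule mult_right_mono[OF UN]) simp
  finally have up: "real (card (Hedges n r)) * D \<le> 10^(r^2) * real n ^ (2*r)" .
  have part2: "(1 / 10 ^ (r^2)) * real (card (Hedges n r)) \<le> real n ^ (2*r) / D"
    using up Dpos by (simp add: field_simps)
  define q where "q = 1600 * r^2"
  define N where "N = n div q"
  have qpos: "q > 0" unfolding q_def using r2 by simp
  have rq: "real q = 1600 * (real r)^2" unfolding q_def by simp
  have nq: "2 * real q \<le> real n" using rn rq by linarith
  have Nq: "N * q \<le> n" unfolding N_def by simp
  have nlt: "n < (N + 1) * q" unfolding N_def using qpos
    by (metis add.commute div_mult_mod_eq mod_less_divisor mult.commute mult_Suc_right nat_add_left_cancel_less plus_1_eq_Suc)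
  have NR: "real n / (2 * real q) \<le> real N"
  proof -
    have "real n < (real N + 1) * real q" using nlt by (metis of_nat_1 of_nat_add of_nat_less_iff of_nat_mult)
    hence "real n / real q < real N + 1" using qpos by (simp add: field_simps)
    moreover have "real n / real q \<ge> 2" using nq qpos by (simp add: field_simps)
    ultimately have "real n / real q - 1 < real N" by linarith
    moreover have "real n / (2 * real q) \<le> real n / real q - 1"
    proof -
      have "real n / (2 * real q) = (real n / real q) / 2" by simp
      thus ?thesis using \<open>real n / real q \<ge> 2\<close> by linarith
    qed
    ultimately show ?thesis by linarith
  qed
  have N1: "N \<ge> 1"
  proof -
    have "real n / (2 * real q) \<ge> 1" using nq qpos by (simp add: field_simps)
    thus ?thesis using NR by linarith
  qed
  have nb: "40 * (40 * r) * N * r \<le> n"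
  proof -
    have "40 * (40 * r) * N * r = N * (1600 * (r * r))" by (simp add: algebra_simps)
    also have "\<dots> = N * q" unfolding q_def power2_eq_square ..
    finally have e: "40 * (40 * r) * N * r = N * q" .
    show ?thesis unfolding e by (rule Nq)
  qed
  have cT: "real n ^ r / 10 \<le> real (card T)" using cT0 by simp
  have LC: "real N ^ r * real n ^ r / (160 * real (40 * r)) \<le> real (induced_edges n r T)"
    by (rule lower_count[OF r2 refl nb N1 T cT])
  have "real n ^ (2*r) / D \<le> real n ^ (2*r) / ((3200 * (real r)^2)^r * (6400 * real r))"
  proof (rule divide_left_mono)
    show "(3200 * (real r)^2)^r * (6400 * real r) \<le> D" unfolding D_def
      by (rule lower_numeric[OF r8]) (use l4 in simp)
    show "0 \<le> real n ^ (2*r)" by simp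
    show "0 < D * ((3200 * (real r)^2)^r * (6400 * real r))" using Dpos r2 by simp
  qed
  also have "real n ^ (2*r) / ((3200 * (real r)^2)^r * (6400 * real r))
      = (real n / (2 * real q))^r * real n ^ r / (160 * real (40 * r))"
  proof -
    have "2 * real q = 3200 * (real r)^2" using rq by simp
    hence h1: "(real n / (2 * real q))^r = real n ^ r / (3200 * (real r)^2)^r" by (simp add: power_divide)
    have h3: "real n ^ (2*r) = real n ^ r * real n ^ r" by (simp add: mult_2 power_add)
    have h2: "160 * real (40 * r) = 6400 * real r" by simp
    have "(real n / (2 * real q))^r * real n ^ r / (160 * real (40 * r))
        = (real n ^ r / (3200 * (real r)^2)^r) * real n ^ r / (6400 * real r)" unfolding h1 h2 ..
    also have "\<dots> = (real n ^ r * real n ^ r) / ((3200 * (real r)^2)^r * (6400 * real r))" by simp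
    also have "\<dots> = real n ^ (2*r) / ((3200 * (real r)^2)^r * (6400 * real r))" unfolding h3 ..
    finally show ?thesis by simp
  qed
  also have "\<dots> \<le> real N ^ r * real n ^ r / (160 * real (40 * r))"
    by (intro divide_right_mono mult_right_mono power_mono NR) (use qpos n0 in auto)
  also have "\<dots> \<le> real (induced_edges n r T)" by (rule LC)
  finally have part1: "real n ^ (2*r) / D \<le> real (induced_edges n r T)" .
  show "real n ^ (2*r) / (10 ^ (r+2) * 2 ^ (3*r^2 + 3*r) * fact (r+1) * log 2 (real n)) \<le> real (induced_edges n r T)
     \<and> (1 / 10 ^ (r^2)) * real (card (Hedges n r)) \<le> real n ^ (2*r) / (10 ^ (r+2) * 2 ^ (3*r^2 + 3*r) * fact (r+1) * log 2 (real n))"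
    using part1 part2 unfolding D_def l_def by simp
qed


end
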